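(* Let $(T_0,\widetilde T_0)$ be a joint pair of closed abstract Friedrichs operators on a complex Hilbert space $\mathcal{H}$, with $T_1:=\widetilde T_0^*$, $\widetilde T_1:=T_0^*$, $\mathcal{W}_0:=\operatorname{dom}T_0=\operatorname{dom}\widetilde T_0$ and $\mathcal{W}:=\operatorname{dom}T_1=\operatorname{dom}\widetilde T_1$, the latter equipped with the graph norm $\|u\|_{T_1}=(\|u\|^2+\|T_1u\|^2)^{1/2}$. Then the sum $\mathcal{W}_0+\operatorname{ker}T_1+\operatorname{ker}\widetilde T_1$ is direct and is a closed subspace of $\mathcal{W}$. In particular, $\mathcal{W}_0\dotplus\operatorname{ker}T_1$ and $\mathcal{W}_0\dotplus\operatorname{ker}\widetilde T_1$ are both closed in $\mathcal{W}$.
   Context: $\mathcal{H}$ is a complex Hilbert space with inner product $\langle\cdot,\cdot\rangle$ and norm $\|\cdot\|$. A pair $(T,\widetilde T)$ of densely defined linear operators on $\mathcal{H}$ is a joint pair of abstract Friedrichs operators if: (T1) $T$ and $\widetilde T$ have a common dense domain $\mathcal{D}$ and $\langle T\varphi,\psi\rangle=\langle\varphi,\widetilde T\psi\rangle$ for all $\varphi,\psi\in\mathcal{D}$; (T2) there is $c>0$ with $\|(T+\widetilde T)\varphi\|\le c\|\varphi\|$ for all $\varphi\in\mathcal{D}$; (T3) there is $\mu_0>0$ with $\langle (T+\widetilde T)\varphi,\varphi\rangle\ge 2\mu_0\|\varphi\|^2$ for all $\varphi\in\mathcal{D}$. A joint pair of closed abstract Friedrichs operators is such a pair $(T_0,\widetilde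 T_0)$ in which both operators are closed. One has $T_0\subseteq T_1$, $\widetilde T_0\subseteq\widetilde T_1$ and $\operatorname{dom}T_1=\operatorname{dom}\widetilde T_1$; the graph norms of $T_1$ and $\widetilde T_1$ on $\mathcal{W}$ are equivalent. *)

theory Defs
  imports "HOL-Analysis.Analysis"
begin

class complex_hilbert = real_normed_vector + complete_space +
  fixes scaleC :: "complex \<Rightarrow> 'a \<Rightarrow> 'a" (infixr "*\<^sub>C" 75)
    and cinner :: "'a \<Rightarrow> 'a \<Rightarrow> complex"
  assumes scaleC_add_right: "a *\<^sub>C (x + y) = a *\<^sub>C x + a *\<^sub>C y"
    and scaleC_add_left: "(a + b) *\<^sub>C x = a *\<^sub>C x + b *\<^sub>C x"
    and scaleC_scaleC: "a *\<^sub>C (b *\<^sub>C x) = (a * b) *\<^sub>C x"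
    and scaleC_one: "1 *\<^sub>C x = x"
    and scaleR_scaleC: "scaleR r x = complex_of_real r *\<^sub>C x"
    and cinner_add_left: "cinner (x + y) z = cinner x z + cinner y z"
    and cinner_scaleC_left: "cinner (a *\<^sub>C x) y = a * cinner x y"
    and cinner_commute: "cinner y x = cnj (cinner x y)"
    and cinner_ge_zero: "0 \<le> Re (cinner x x)"
    and norm_eq_sqrt_cinner: "norm x = sqrt (Re (cinner x x))"

instantiation complex :: complex_hilbert
begin
definition scaleC_complex :: "complex \<Rightarrow> complex \<Rightarrow> complex" where
  "scaleC_complex a x = a * x"
definition cinner_complex :: "complex \<Rightarrow> complex \<Rightarrow> complex" where
  "cinner_complex x y = x * cnj y"
instance
  by standard (auto simp: scaleC_complex_def cinner_complex_def algebra_simps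
      scaleR_conv_of_real complex_norm_square[symmetric])
end

definition csubspace :: "'a::complex_hilbert set \<Rightarrow> bool" where
  "csubspace S \<longleftrightarrow> 0 \<in> S \<and> (\<forall>x\<in>S. \<forall>y\<in>S. x + y \<in> S) \<and> (\<forall>c. \<forall>x\<in>S. c *\<^sub>C x \<in> S)"

text \<open>A densely defined linear operator with domain D acting by f (values of f outside D
are irrelevant).\<close>
definition dd_lin_op :: "'a::complex_hilbert set \<Rightarrow> ('a \<Rightarrow> 'a) \<Rightarrow> bool" where
  "dd_lin_op D f \<longleftrightarrow> csubspace D \<and> closure D = UNIV \<and>
     (\<forall>x\<in>D. \<forall>y\<in>D. f (x + y) = f x + f y) \<and> (\<forall>c. \<forall>x\<in>D. f (c *\<^sub>C x) = c *\<^sub>C f x)"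

definition closed_op :: "'a::complex_hilbert set \<Rightarrow> ('a \<Rightarrow> 'a) \<Rightarrow> bool" where
  "closed_op D f \<longleftrightarrow> closed {(x, f x) | x. x \<in> D}"

definition is_adjoint :: "'a::complex_hilbert set \<Rightarrow> ('a \<Rightarrow> 'a) \<Rightarrow> 'a set \<Rightarrow> ('a \<Rightarrow> 'a) \<Rightarrow> bool" where
  "is_adjoint D f D' g \<longleftrightarrow>
     D' = {y. \<exists>z. \<forall>x\<in>D. cinner (f x) y = cinner x z} \<and>
     (\<forall>y\<in>D'. \<forall>x\<in>D. cinner (f x) y = cinner x (g y))"

text \<open>Joint pair of abstract Friedrichs operators with common dense domain D, conditions
(T1)-(T3). In (T3) the quantity is real by (T1); we compare its real part.\<close>
definition joint_AFO :: "'a::complex_hilbert set \<Rightarrow> ('a \<Rightarrow> 'a) \<Rightarrow> ('a \<Rightarrow> 'a) \<Rightarrow> bool" where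
  "joint_AFO D T Tt \<longleftrightarrow> dd_lin_op D T \<and> dd_lin_op D Tt \<and>
     (\<forall>\<phi>\<in>D. \<forall>\<psi>\<in>D. cinner (T \<phi>) \<psi> = cinner \<phi> (Tt \<psi>)) \<and>
     (\<exists>c>0. \<forall>\<phi>\<in>D. norm (T \<phi> + Tt \<phi>) \<le> c * norm \<phi>) \<and>
     (\<exists>\<mu>0>0. \<forall>\<phi>\<in>D. Re (cinner (T \<phi> + Tt \<phi>) \<phi>) \<ge> 2 * \<mu>0 * (norm \<phi>)\<^sup>2)"

definition closed_joint_AFO :: "'a::complex_hilbert set \<Rightarrow> ('a \<Rightarrow> 'a) \<Rightarrow> ('a \<Rightarrow> 'a) \<Rightarrow> bool" where
  "closed_joint_AFO D T Tt \<longleftrightarrow> joint_AFO D T Tt \<and> closed_op D T \<and> closed_op D Tt"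

definition op_ker :: "'a::complex_hilbert set \<Rightarrow> ('a \<Rightarrow> 'a) \<Rightarrow> 'a set" where
  "op_ker D f = {u \<in> D. f u = 0}"

definition closed_graph_norm :: "'a::complex_hilbert set \<Rightarrow> ('a \<Rightarrow> 'a) \<Rightarrow> 'a set \<Rightarrow> bool" where
  "closed_graph_norm W T S \<longleftrightarrow>
     (\<forall>u x. (\<forall>n. u n \<in> S) \<longrightarrow> x \<in> W \<longrightarrow>
        (\<lambda>n. sqrt ((norm (u n - x))\<^sup>2 + (norm (T (u n) - T x))\<^sup>2)) \<longlonglongrightarrow> 0 \<longrightarrow> x \<in> S)"

end

theory Submission
  imports Defs "HOL-Analysis.Analysis"
begin

lemma cinner_add_right: "cinner x (y + z) = cinner x y + cinner (x::'a::complex_hilbert) z"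
  by (metis cinner_add_left cinner_commute complex_cnj_add)

lemma cinner_scaleC_right: "cinner x (a *\<^sub>C y) = cnj a * cinner (x::'a::complex_hilbert) y"
  by (metis cinner_scaleC_left cinner_commute complex_cnj_mult)

lemma scaleC_minus1: "(-1) *\<^sub>C x = - (x::'a::complex_hilbert)"
  using scaleR_scaleC[of "-1" x] by simp

lemma cinner_zero_left[simp]: "cinner 0 (y::'a::complex_hilbert) = 0"
  using cinner_add_left[of 0 0 y] by simp

lemma cinner_zero_right[simp]: "cinner (y::'a::complex_hilbert) 0 = 0"
  by (metis cinner_commute cinner_zero_left complex_cnj_zero)

lemma cinner_minus_left: "cinner (- x) (y::'a::complex_hilbert) = - cinner x y"
  by (metis cinner_scaleC_left scaleC_minus1 mult_minus1)

lemma cinner_minus_right: "cinner y (- x::'a::complex_hilbert) = - cinner y x"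
  by (metis cinner_commute cinner_minus_left complex_cnj_minus)

lemma cinner_diff_left: "cinner (x - z) (y::'a::complex_hilbert) = cinner x y - cinner z y"
  by (metis cinner_add_left cinner_minus_left diff_conv_add_uminus)

lemma cinner_diff_right: "cinner y (x - z::'a::complex_hilbert) = cinner y x - cinner y z"
  by (metis cinner_add_right cinner_minus_right diff_conv_add_uminus)

lemma cinner_scaleR_left: "cinner (r *\<^sub>R x) (y::'a::complex_hilbert) = of_real r * cinner x y"
  by (simp add: scaleR_scaleC cinner_scaleC_left)

lemma cinner_scaleR_right: "cinner y (r *\<^sub>R x::'a::complex_hilbert) = of_real r * cinner y x"
  by (simp add: scaleR_scaleC cinner_scaleC_right)

lemma cinner_self: "cinner x (x::'a::complex_hilbert) = of_real ((norm x)^2)"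
proof -
  have "Im (cinner x x) = 0" using cinner_commute[of x x]
    by (metis complex_cnj_cancel_iff complex_cnj_zero_iff complex_eq_iff complex_is_Real_iff
        Reals_cnj_iff)
  moreover have "Re (cinner x x) = (norm x)^2"
    using norm_eq_sqrt_cinner[of x] cinner_ge_zero[of x] by simp
  ultimately show ?thesis by (simp add: complex_eq_iff)
qed

lemma cinner_eq_zero_iff: "cinner x x = 0 \<longleftrightarrow> x = (0::'a::complex_hilbert)"
  by (simp add: cinner_self)

lemma cauchy_schwarz: "norm (cinner x y) \<le> norm x * norm (y::'a::complex_hilbert)"
proof (cases "y = 0")
  case True then show ?thesis by simp
next
  case False
  define p where "p = cinner x y"
  define N where "N = (norm y)^2"
  have Npos: "N > 0" using False by (simp add: N_def)
  define t where "t = p / of_real N"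
  have yx: "cinner y x = cnj p" by (simp add: p_def cinner_commute[of y x])
  have E0: "cinner (x - t *\<^sub>C y) (x - t *\<^sub>C y)
     = cinner x x - cnj t * p - t * cnj p + t * cnj t * of_real N"
    by (simp add: cinner_diff_left cinner_diff_right cinner_scaleC_left cinner_scaleC_right
        yx p_def N_def cinner_self[of y] algebra_simps)
  have pp: "(complex_of_real (cmod p))^2 = p * cnj p"
    by (metis complex_norm_square of_real_power)
  have e1: "cnj t * p = of_real ((norm p)^2 / N)"
    using Npos pp by (simp add: t_def field_simps mult.commute)
  have e2: "t * cnj p = of_real ((norm p)^2 / N)"
    using Npos pp by (simp add: t_def field_simps mult.commute)
  have e3: "t * cnj t * of_real N = of_real ((norm p)^2 / N)"
    using Npos pp by (simp add: t_def field_simps mult.commute power2_eq_square)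
  have "cinner x x - cnj t * p - t * cnj p + t * cnj t * of_real N = of_real ((norm x)^2 - (norm p)^2 / N)"
    unfolding e1 e2 e3 cinner_self by simp
  with E0 have "0 \<le> (norm x)^2 - (norm p)^2 / N"
    using cinner_ge_zero[of "x - t *\<^sub>C y"] by simp
  then have "(norm p)^2 \<le> (norm x * norm y)^2"
    using Npos by (simp add: N_def field_simps power_mult_distrib)
  then show ?thesis unfolding p_def
    by (meson norm_ge_zero power2_le_imp_le mult_nonneg_nonneg)
qed

lemma bounded_bilinear_cinner: "bounded_bilinear (cinner :: 'a::complex_hilbert \<Rightarrow> 'a \<Rightarrow> complex)"
proof
  show "\<exists>K. \<forall>a b::'a. norm (cinner a b) \<le> norm a * norm b * K"
    by (rule exI[of _ 1]) (simp add: cauchy_schwarz)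
qed (simp_all add: cinner_add_left cinner_add_right cinner_scaleR_left cinner_scaleR_right
     scaleR_conv_of_real)

lemmas tendsto_cinner = bounded_bilinear.tendsto[OF bounded_bilinear_cinner]

lemma dense_zero:
  assumes "closure D = UNIV" "\<forall>x\<in>D. cinner x z = 0"
  shows "z = (0::'a::complex_hilbert)"
proof -
  have "z \<in> closure D" using assms by simp
  then obtain f where f: "\<forall>n. f n \<in> D" "f \<longlonglongrightarrow> z" by (auto simp: closure_sequential)
  have "(\<lambda>n. cinner (f n) z) \<longlonglongrightarrow> cinner z z"
    by (rule tendsto_cinner[OF f(2) tendsto_const])
  moreover have "(\<lambda>n. cinner (f n) z) = (\<lambda>n. 0)" using f assms by auto
  ultimately have "cinner z z = 0" by (metis LIMSEQ_const_iff)
  then show ?thesis by (simp add: cinner_eq_zero_iff)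
qed

lemma adj_eq: "is_adjoint D f D' g \<Longrightarrow> y \<in> D' \<Longrightarrow> x \<in> D \<Longrightarrow> cinner (f x) y = cinner x (g y)"
  unfolding is_adjoint_def by blast

lemma adj_unique:
  assumes "is_adjoint D f D' g" "closure D = UNIV" "\<forall>x\<in>D. cinner (f x) y = cinner x z"
  shows "y \<in> D' \<and> g y = z"
proof -
  have y: "y \<in> D'" using assms(1,3) unfolding is_adjoint_def by blast
  have "\<forall>x\<in>D. cinner x (g y - z) = 0"
    using assms(3) adj_eq[OF assms(1) y] by (simp add: cinner_diff_right)
  then have "g y - z = 0" using dense_zero[OF assms(2)] by blast
  then show ?thesis using y by simp
qed

lemma adj_add:
  assumes "is_adjoint D f D' g" "closure D = UNIV" "u \<in> D'" "v \<in> D'"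
  shows "u + v \<in> D' \<and> g (u + v) = g u + g v"
  using assms by (intro adj_unique) (auto simp: cinner_add_right adj_eq)

lemma adj_diff:
  assumes "is_adjoint D f D' g" "closure D = UNIV" "u \<in> D'" "v \<in> D'"
  shows "u - v \<in> D' \<and> g (u - v) = g u - g v"
  using assms by (intro adj_unique) (auto simp: cinner_diff_right adj_eq)

lemma adj_scale:
  assumes "is_adjoint D f D' g" "closure D = UNIV" "u \<in> D'"
  shows "a *\<^sub>C u \<in> D' \<and> g (a *\<^sub>C u) = a *\<^sub>C g u"
  using assms by (intro adj_unique) (auto simp: cinner_scaleC_right adj_eq)

lemma adj_zero:
  assumes "is_adjoint D f D' g" "closure D = UNIV"
  shows "0 \<in> D' \<and> g 0 = 0"
  using assms by (intro adj_unique) auto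

lemma ker_closed:
  assumes "is_adjoint D f D' g" "closure D = UNIV" "\<forall>n. a n \<in> op_ker D' g" "a \<longlonglongrightarrow> a0"
  shows "a0 \<in> op_ker D' g"
proof -
  have "\<forall>x\<in>D. cinner (f x) a0 = cinner x 0"
  proof
    fix x assume x: "x \<in> D"
    have "(\<lambda>n. cinner (f x) (a n)) \<longlonglongrightarrow> cinner (f x) a0"
      by (rule tendsto_cinner[OF tendsto_const assms(4)])
    moreover have "(\<lambda>n. cinner (f x) (a n)) = (\<lambda>n. 0)"
      using assms(3) adj_eq[OF assms(1) _ x] by (auto simp: op_ker_def)
    ultimately show "cinner (f x) a0 = cinner x 0" by (simp add: LIMSEQ_const_iff)
  qed
  from adj_unique[OF assms(1,2) this] show ?thesis by (auto simp: op_ker_def)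
qed

lemma scaleC_zero_right[simp]: "a *\<^sub>C (0::'a::complex_hilbert) = 0"
  using scaleC_add_right[of a "0::'a" 0] by simp

lemma ker_subspace:
  assumes "is_adjoint D f D' g" "closure D = UNIV"
  shows "0 \<in> op_ker D' g"
    "u \<in> op_ker D' g \<Longrightarrow> v \<in> op_ker D' g \<Longrightarrow> u + v \<in> op_ker D' g"
    "u \<in> op_ker D' g \<Longrightarrow> v \<in> op_ker D' g \<Longrightarrow> u - v \<in> op_ker D' g"
    "u \<in> op_ker D' g \<Longrightarrow> a *\<^sub>C u \<in> op_ker D' g"
  using adj_zero[OF assms] adj_add[OF assms] adj_diff[OF assms] adj_scale[OF assms]
  by (auto simp: op_ker_def)

lemma dd_props:
  assumes "dd_lin_op D f"
  shows "closure D = UNIV" "0 \<in> D" "x \<in> D \<Longrightarrow> y \<in> D \<Longrightarrow> x + y \<in> D"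
    "x \<in> D \<Longrightarrow> a *\<^sub>C x \<in> D"
    "x \<in> D \<Longrightarrow> y \<in> D \<Longrightarrow> f (x + y) = f x + f y"
    "x \<in> D \<Longrightarrow> f (a *\<^sub>C x) = a *\<^sub>C f x"
  using assms by (auto simp: dd_lin_op_def csubspace_def)

lemma dd_diff:
  assumes "dd_lin_op D f" "x \<in> D" "y \<in> D"
  shows "x - y \<in> D" "f (x - y) = f x - f y"
proof -
  have m: "- y \<in> D" "f (- y) = - f y"
    using dd_props(4,6)[OF assms(1), of y "-1"] assms(3) by (simp_all add: scaleC_minus1)
  show "x - y \<in> D" using dd_props(3)[OF assms(1) assms(2) m(1)] by simp
  show "f (x - y) = f x - f y" using dd_props(5)[OF assms(1) assms(2) m(1)] m(2) by simp
qed

lemma cauchy_dom: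
  fixes a :: "nat \<Rightarrow> 'a::real_normed_vector" and u :: "nat \<Rightarrow> 'b::real_normed_vector"
    and y :: "nat \<Rightarrow> 'c::real_normed_vector"
  assumes "Cauchy u" "Cauchy y" "\<And>m n. norm (a m - a n) \<le> K * (norm (u m - u n) + norm (y m - y n))"
  shows "Cauchy a"
proof (rule metric_CauchyI)
  fix e :: real assume e: "e > 0"
  define e' where "e' = e / (2 * (\<bar>K\<bar> + 1))"
  have e': "e' > 0" using e by (simp add: e'_def)
  obtain M1 where M1: "\<forall>m\<ge>M1. \<forall>n\<ge>M1. dist (u m) (u n) < e'" using assms(1) e' by (meson metric_CauchyD)
  obtain M2 where M2: "\<forall>m\<ge>M2. \<forall>n\<ge>M2. dist (y m) (y n) < e'" using assms(2) e' by (meson metric_CauchyD)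
  show "\<exists>M. \<forall>m\<ge>M. \<forall>n\<ge>M. dist (a m) (a n) < e"
  proof (intro exI allI impI)
    fix m n assume "max M1 M2 \<le> m" "max M1 M2 \<le> n"
    then have "norm (u m - u n) < e'" "norm (y m - y n) < e'" using M1 M2 by (auto simp: dist_norm)
    then have "norm (u m - u n) + norm (y m - y n) < 2 * e'" by simp
    then have "K * (norm (u m - u n) + norm (y m - y n)) \<le> \<bar>K\<bar> * (2 * e')"
      by (smt (verit, best) mult_mono abs_ge_self abs_ge_zero norm_ge_zero)
    also have "\<dots> < e" using e by (simp add: e'_def field_simps)
    finally show "dist (a m) (a n) < e" using assms(3)[of m n] by (simp add: dist_norm)
  qed
qed

lemma div_sq:
  fixes m n K :: real
  assumes "0 \<le> K" "0 \<le> n" "m * n^2 \<le> n * K"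
  shows "m * n \<le> K"
proof (cases "n = 0")
  case True then show ?thesis using assms by simp
next
  case False
  then have "n > 0" using assms by simp
  moreover have "n * (m * n) \<le> n * K" using assms(3) by (simp add: power2_eq_square algebra_simps)
  ultimately show ?thesis by simp
qed

locale afo =
  fixes W0 W Wt :: "'a::complex_hilbert set" and T0 Tt0 T1 Tt1 :: "'a \<Rightarrow> 'a" and c mu :: real
  assumes lin0: "dd_lin_op W0 T0" and lint: "dd_lin_op W0 Tt0"
   and sym: "\<forall>\<phi>\<in>W0. \<forall>\<psi>\<in>W0. cinner (T0 \<phi>) \<psi> = cinner \<phi> (Tt0 \<psi>)"
   and cpos: "c > 0" and bnd: "\<forall>\<phi>\<in>W0. norm (T0 \<phi> + Tt0 \<phi>) \<le> c * norm \<phi>"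
   and mupos: "mu > 0" and pos: "\<forall>\<phi>\<in>W0. Re (cinner (T0 \<phi> + Tt0 \<phi>) \<phi>) \<ge> 2*mu*(norm \<phi>)^2"
   and clo: "closed_op W0 T0"
   and adj1: "is_adjoint W0 Tt0 W T1" and adj2: "is_adjoint W0 T0 Wt Tt1"
begin

lemma dense: "closure W0 = UNIV" using dd_props(1)[OF lin0] .

lemmas a1add = adj_add[OF adj1 dense] and a1diff = adj_diff[OF adj1 dense]
  and a1zero = adj_zero[OF adj1 dense] and a1eq = adj_eq[OF adj1]
  and a2add = adj_add[OF adj2 dense] and a2diff = adj_diff[OF adj2 dense]
  and a2zero = adj_zero[OF adj2 dense] and a2eq = adj_eq[OF adj2]
  and k1 = ker_subspace[OF adj1 dense] and k2 = ker_subspace[OF adj2 dense]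

lemma S_sym: "x \<in> W0 \<Longrightarrow> y \<in> W0 \<Longrightarrow> cinner (T0 x + Tt0 x) y = cinner x (T0 y + Tt0 y)"
proof -
  assume x: "x \<in> W0" and y: "y \<in> W0"
  have "cinner (Tt0 x) y = cnj (cinner y (Tt0 x))" by (rule cinner_commute)
  also have "\<dots> = cnj (cinner (T0 y) x)" using sym x y by simp
  also have "\<dots> = cinner x (T0 y)" by (metis cinner_commute complex_cnj_cnj)
  finally show ?thesis using sym x y by (simp add: cinner_add_left cinner_add_right)
qed

lemma S_diff: "x \<in> W0 \<Longrightarrow> y \<in> W0 \<Longrightarrow> x - y \<in> W0 \<and>
   T0 (x - y) + Tt0 (x - y) = (T0 x + Tt0 x) - (T0 y + Tt0 y)"
  using dd_diff[OF lin0] dd_diff[OF lint] by simp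

lemma ext: "\<exists>z. (\<forall>x\<in>W0. cinner (T0 x + Tt0 x) y = cinner x z) \<and> norm z \<le> c * norm y"
proof -
  have "y \<in> closure W0" using dense by simp
  then obtain f where f: "\<forall>n. f n \<in> W0" "f \<longlonglongrightarrow> y" by (auto simp: closure_sequential)
  define g where "g n = T0 (f n) + Tt0 (f n)" for n
  have "Cauchy g"
  proof (rule cauchy_dom[where u = f and y = "\<lambda>n. 0::'a" and K = c])
    show "Cauchy f" using f(2) by (rule LIMSEQ_imp_Cauchy)
    show "Cauchy (\<lambda>n. 0::'a)" by (rule LIMSEQ_imp_Cauchy[OF tendsto_const])
    fix m n show "norm (g m - g n) \<le> c * (norm (f m - f n) + norm ((0::'a) - 0))"
      using S_diff[of "f m" "f n"] f(1) bnd unfolding g_def by (metis add_0_right diff_self norm_zero)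
  qed
  then obtain z where z: "g \<longlonglongrightarrow> z" using Cauchy_convergent_iff convergent_def by blast
  have "\<forall>x\<in>W0. cinner (T0 x + Tt0 x) y = cinner x z"
  proof
    fix x assume x: "x \<in> W0"
    have l1: "(\<lambda>n. cinner (T0 x + Tt0 x) (f n)) \<longlonglongrightarrow> cinner (T0 x + Tt0 x) y"
      by (rule tendsto_cinner[OF tendsto_const f(2)])
    have l2: "(\<lambda>n. cinner x (g n)) \<longlonglongrightarrow> cinner x z"
      by (rule tendsto_cinner[OF tendsto_const z])
    have "(\<lambda>n. cinner (T0 x + Tt0 x) (f n)) = (\<lambda>n. cinner x (g n))"
      using S_sym x f(1) unfolding g_def by auto
    then show "cinner (T0 x + Tt0 x) y = cinner x z" using l1 l2 LIMSEQ_unique by metis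
  qed
  moreover have "norm z \<le> c * norm y"
  proof (rule LIMSEQ_le[OF tendsto_norm[OF z] tendsto_mult[OF tendsto_const tendsto_norm[OF f(2)]]])
    show "\<exists>N. \<forall>n\<ge>N. norm (g n) \<le> c * norm (f n)" using bnd f(1) unfolding g_def by auto
  qed
  ultimately show ?thesis by blast
qed

lemma W0_sub: "x \<in> W0 \<Longrightarrow> x \<in> W \<and> T1 x = T0 x \<and> x \<in> Wt \<and> Tt1 x = Tt0 x"
proof -
  assume x: "x \<in> W0"
  have "\<forall>\<phi>\<in>W0. cinner (Tt0 \<phi>) x = cinner \<phi> (T0 x)"
    using sym x by (metis cinner_commute)
  moreover have "\<forall>\<phi>\<in>W0. cinner (T0 \<phi>) x = cinner \<phi> (Tt0 x)" using sym x by blast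
  ultimately show ?thesis using adj_unique[OF adj1 dense] adj_unique[OF adj2 dense] by blast
qed

lemma WWt: "u \<in> W \<or> u \<in> Wt \<Longrightarrow> u \<in> W \<and> u \<in> Wt \<and> norm (T1 u + Tt1 u) \<le> c * norm u"
proof -
  assume u: "u \<in> W \<or> u \<in> Wt"
  obtain z where z: "\<forall>x\<in>W0. cinner (T0 x + Tt0 x) u = cinner x z" "norm z \<le> c * norm u"
    using ext by blast
  show ?thesis
  proof (cases "u \<in> W")
    case True
    have "\<forall>x\<in>W0. cinner (T0 x) u = cinner x (z - T1 u)"
      using z(1) a1eq[OF True] by (simp add: cinner_add_left cinner_diff_right algebra_simps)
    from adj_unique[OF adj2 dense this] show ?thesis using True z(2) by simp
  next
    case False
    then have W: "u \<in> Wt" using u by simp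
    have "\<forall>x\<in>W0. cinner (Tt0 x) u = cinner x (z - Tt1 u)"
      using z(1) a2eq[OF W] by (simp add: cinner_add_left cinner_diff_right algebra_simps)
    from adj_unique[OF adj1 dense this] show ?thesis using W z(2) by simp
  qed
qed

lemma P_diff: "u \<in> W \<Longrightarrow> v \<in> W \<Longrightarrow> (T1 u + Tt1 u) - (T1 v + Tt1 v) = T1 (u - v) + Tt1 (u - v)"
  using a1diff[of u v] a2diff[of u v] WWt[of u] WWt[of v] by simp

lemma P_cont:
  assumes "\<forall>n. f n \<in> W" "u \<in> W" "f \<longlonglongrightarrow> u"
  shows "(\<lambda>n. T1 (f n) + Tt1 (f n)) \<longlonglongrightarrow> T1 u + Tt1 u"
proof (rule LIM_zero_cancel, rule Lim_null_comparison)
  have "norm (T1 (f n) + Tt1 (f n) - (T1 u + Tt1 u)) \<le> c * norm (f n - u)" for n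
  proof -
    have "f n - u \<in> W" using a1diff assms(1,2) by blast
    then show ?thesis using P_diff[of "f n" u] assms(1,2) WWt[of "f n - u"] by simp
  qed
  then show "\<forall>\<^sub>F n in sequentially. norm (T1 (f n) + Tt1 (f n) - (T1 u + Tt1 u)) \<le> c * norm (f n - u)"
    by (simp add: always_eventually)
  have "(\<lambda>n. norm (f n - u)) \<longlonglongrightarrow> 0" using assms(3) by (simp add: LIM_zero tendsto_norm_zero)
  then show "(\<lambda>n. c * norm (f n - u)) \<longlonglongrightarrow> 0" by (rule tendsto_mult_right_zero)
qed

lemma P_pos: "u \<in> W \<Longrightarrow> Re (cinner (T1 u + Tt1 u) u) \<ge> 2 * mu * (norm u)^2"
proof -
  assume u: "u \<in> W"
  have "u \<in> closure W0" using dense by simp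
  then obtain f where f: "\<forall>n. f n \<in> W0" "f \<longlonglongrightarrow> u" by (auto simp: closure_sequential)
  have fW: "\<forall>n. f n \<in> W" using f(1) W0_sub by blast
  have "(\<lambda>n. T1 (f n) + Tt1 (f n)) \<longlonglongrightarrow> T1 u + Tt1 u" using P_cont[OF fW u f(2)] .
  then have L: "(\<lambda>n. Re (cinner (T1 (f n) + Tt1 (f n)) (f n))) \<longlonglongrightarrow> Re (cinner (T1 u + Tt1 u) u)"
    by (intro tendsto_Re tendsto_cinner f(2))
  have R: "(\<lambda>n. 2 * mu * (norm (f n))^2) \<longlonglongrightarrow> 2 * mu * (norm u)^2"
    by (intro tendsto_intros f(2))
  show ?thesis
  proof (rule LIMSEQ_le[OF R L])
    show "\<exists>N. \<forall>n\<ge>N. 2 * mu * (norm (f n))\<^sup>2 \<le> Re (cinner (T1 (f n) + Tt1 (f n)) (f n))"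
      using pos f(1) W0_sub by auto
  qed
qed

end

context afo begin

lemma est:
  assumes w: "w \<in> W0" and a: "a \<in> op_ker W T1" and b: "b \<in> op_ker Wt Tt1"
  shows "w + a + b \<in> W \<and> 2 * mu * norm a \<le> c * norm (w + a + b) + norm (T1 (w + a + b))
     \<and> 2 * mu * norm b \<le> norm (T1 (w + a + b))"
proof -
  define u where "u = w + a + b"
  have aW: "a \<in> W" "T1 a = 0" using a by (auto simp: op_ker_def)
  have bW: "b \<in> Wt" "Tt1 b = 0" using b by (auto simp: op_ker_def)
  have aWt: "a \<in> Wt" using WWt aW by blast
  have bWW: "b \<in> W" using WWt bW by blast
  have wW: "w \<in> W" "T1 w = T0 w" "w \<in> Wt" "Tt1 w = Tt0 w" using W0_sub w by auto
  have uW: "u \<in> W" and T1u: "T1 u = T0 w + T1 b" unfolding u_def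
    using a1add[of w a] a1add[of "w + a" b] wW aW bWW by auto
  have uWt: "u \<in> Wt" and Tt1u: "Tt1 u = Tt0 w + Tt1 a" unfolding u_def
    using a2add[of w a] a2add[of "w + a" b] wW aWt bW by auto
  have "cinner a (Tt0 w) = cnj (cinner (Tt0 w) a)" by (rule cinner_commute)
  also have "cinner (Tt0 w) a = 0" using a1eq[OF aW(1) w] aW(2) by simp
  finally have aw0: "cinner a (Tt0 w) = 0" by simp
  have ip: "cinner a (Tt1 u) = cinner a (Tt1 a)" using Tt1u aw0 by (simp add: cinner_add_right)
  have "2 * mu * (norm a)^2 \<le> Re (cinner (T1 a + Tt1 a) a)" using P_pos aW by blast
  also have "\<dots> = Re (cinner (Tt1 a) a)" using aW by simp
  also have "\<dots> = Re (cinner a (Tt1 u))" using ip cinner_commute[of "Tt1 a" a] by simp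
  also have "\<dots> \<le> norm (cinner a (Tt1 u))" by (rule complex_Re_le_cmod)
  also have "\<dots> \<le> norm a * norm (Tt1 u)" by (rule cauchy_schwarz)
  finally have "2 * mu * norm a \<le> norm (Tt1 u)" by (rule div_sq[OF norm_ge_zero norm_ge_zero])
  also have "norm (Tt1 u) \<le> norm (T1 u + Tt1 u) + norm (T1 u)"
    using norm_triangle_ineq4[of "T1 u + Tt1 u" "T1 u"] by simp
  also have "\<dots> \<le> c * norm u + norm (T1 u)"
  proof -
    have "norm (T1 u + Tt1 u) \<le> c * norm u" using WWt uW by blast
    then show ?thesis by simp
  qed
  finally have Ea: "2 * mu * norm a \<le> c * norm u + norm (T1 u)" .
  have "cinner (T0 w) b = 0" using a2eq[OF bW(1) w] bW(2) by simp
  then have ip2: "cinner (T1 u) b = cinner (T1 b) b" using T1u by (simp add: cinner_add_left)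
  have "2 * mu * (norm b)^2 \<le> Re (cinner (T1 b + Tt1 b) b)" using P_pos bWW by blast
  also have "\<dots> = Re (cinner (T1 u) b)" using bW ip2 by simp
  also have "\<dots> \<le> norm (cinner (T1 u) b)" by (rule complex_Re_le_cmod)
  also have "\<dots> \<le> norm b * norm (T1 u)" by (metis cauchy_schwarz mult.commute)
  finally have Eb: "2 * mu * norm b \<le> norm (T1 u)" by (rule div_sq[OF norm_ge_zero norm_ge_zero])
  from uW Ea Eb show ?thesis by (simp only: u_def)
qed

lemma closed3:
  assumes w: "\<forall>n. w n \<in> W0" and a: "\<forall>n. a n \<in> op_ker W T1" and b: "\<forall>n. b n \<in> op_ker Wt Tt1"
    and x: "x \<in> W" and ux: "(\<lambda>n. w n + a n + b n) \<longlonglongrightarrow> x"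
    and Tx: "(\<lambda>n. T1 (w n + a n + b n)) \<longlonglongrightarrow> T1 x"
  shows "\<exists>w' a' b'. w' \<in> W0 \<and> a' \<in> op_ker W T1 \<and> b' \<in> op_ker Wt Tt1 \<and> x = w' + a' + b'
     \<and> a \<longlonglongrightarrow> a' \<and> b \<longlonglongrightarrow> b'"
proof -
  define u where "u n = w n + a n + b n" for n
  have uW: "\<forall>n. u n \<in> W" using est w a b unfolding u_def by blast
  define K where "K = (c + 1) / (2 * mu)"
  have bound: "norm (a m - a n) \<le> K * (norm (u m - u n) + norm (T1 (u m) - T1 (u n)))
    \<and> norm (b m - b n) \<le> K * (norm (u m - u n) + norm (T1 (u m) - T1 (u n)))" for m n
  proof -
    have d: "u m - u n = (w m - w n) + (a m - a n) + (b m - b n)" unfolding u_def by simp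
    have E: "2 * mu * norm (a m - a n) \<le> c * norm (u m - u n) + norm (T1 (u m - u n))
       \<and> 2 * mu * norm (b m - b n) \<le> norm (T1 (u m - u n))"
      unfolding d by (rule est[OF dd_diff(1)[OF lin0 w[rule_format] w[rule_format]]
          k1(3)[OF a[rule_format] a[rule_format]] k2(3)[OF b[rule_format] b[rule_format]], THEN conjunct2])
    have T: "T1 (u m - u n) = T1 (u m) - T1 (u n)" using a1diff uW by blast
    define A where "A = norm (u m - u n)"
    define B where "B = norm (T1 (u m) - T1 (u n))"
    have AB: "A \<ge> 0" "B \<ge> 0" unfolding A_def B_def by auto
    have "c * A + B \<le> (c + 1) * (A + B)" using AB cpos by (simp add: algebra_simps)
    moreover have "B \<le> (c + 1) * (A + B)" using AB cpos by (simp add: algebra_simps)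
    moreover have "2 * mu * norm (a m - a n) \<le> c * A + B" "2 * mu * norm (b m - b n) \<le> B"
      using E T unfolding A_def B_def by auto
    ultimately have "2 * mu * norm (a m - a n) \<le> (c + 1) * (A + B)"
       "2 * mu * norm (b m - b n) \<le> (c + 1) * (A + B)"
      by linarith+
    then show ?thesis unfolding K_def A_def[symmetric] B_def[symmetric] using mupos
      by (simp add: field_simps)
  qed
  have cu: "Cauchy u" using ux unfolding u_def[symmetric] by (rule LIMSEQ_imp_Cauchy)
  have cT: "Cauchy (\<lambda>n. T1 (u n))" using Tx unfolding u_def[symmetric] by (rule LIMSEQ_imp_Cauchy)
  have "Cauchy a" by (rule cauchy_dom[OF cu cT]) (use bound in blast)
  then obtain a' where a': "a \<longlonglongrightarrow> a'" using Cauchy_convergent_iff convergent_def by blast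
  have "Cauchy b" by (rule cauchy_dom[OF cu cT]) (use bound in blast)
  then obtain b' where b': "b \<longlonglongrightarrow> b'" using Cauchy_convergent_iff convergent_def by blast
  have a'k: "a' \<in> op_ker W T1" by (rule ker_closed[OF adj1 dense a a'])
  have b'k: "b' \<in> op_ker Wt Tt1" by (rule ker_closed[OF adj2 dense b b'])
  have b'W: "b' \<in> W" using b'k WWt unfolding op_ker_def by blast
  have bW: "\<forall>n. b n \<in> W" using b WWt unfolding op_ker_def by blast
  have wl: "w \<longlonglongrightarrow> x - a' - b'"
  proof -
    have "(\<lambda>n. u n - a n - b n) \<longlonglongrightarrow> x - a' - b'"
      using ux a' b' unfolding u_def[symmetric] by (intro tendsto_diff)
    moreover have "(\<lambda>n. u n - a n - b n) = w" unfolding u_def by auto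
    ultimately show ?thesis by simp
  qed
  have Tw: "T0 (w n) = T1 (u n) - (T1 (b n) + Tt1 (b n))" for n
  proof -
    have "T1 (u n) = T1 (w n) + T1 (a n) + T1 (b n)" unfolding u_def
      using a1add[of "w n" "a n"] a1add[of "w n + a n" "b n"] W0_sub w a bW
      by (auto simp: op_ker_def)
    then show ?thesis using W0_sub w a b by (auto simp: op_ker_def)
  qed
  have Twl: "(\<lambda>n. T0 (w n)) \<longlonglongrightarrow> T1 x - (T1 b' + Tt1 b')"
    unfolding Tw using Tx P_cont[OF bW b'W b'] unfolding u_def[symmetric] by (intro tendsto_diff)
  define G where "G = {(y, T0 y) | y. y \<in> W0}"
  have G: "closed G" using clo by (simp add: closed_op_def G_def)
  have Gs: "\<forall>n. (w n, T0 (w n)) \<in> G" using w by (auto simp: G_def)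
  have Gl: "(\<lambda>n. (w n, T0 (w n))) \<longlonglongrightarrow> (x - a' - b', T1 x - (T1 b' + Tt1 b'))"
    by (rule tendsto_Pair[OF wl Twl])
  have "(x - a' - b', T1 x - (T1 b' + Tt1 b')) \<in> G"
  proof -
    have "\<forall>x l. (\<forall>n. x n \<in> G) \<and> (x \<longlonglongrightarrow> l) \<longrightarrow> l \<in> G"
      using G by (simp only: closed_sequential_limits)
    from this[rule_format, OF conjI[OF Gs Gl]] show ?thesis .
  qed
  then have "x - a' - b' \<in> W0" by (auto simp: G_def)
  moreover have "x = (x - a' - b') + a' + b'" by simp
  ultimately show ?thesis using a'k b'k a' b' by blast
qed

end

lemma graph_conv:
  fixes u :: "nat \<Rightarrow> 'a::real_normed_vector" and T :: "'a \<Rightarrow> 'b::real_normed_vector"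
  assumes "(\<lambda>n. sqrt ((norm (u n - x))\<^sup>2 + (norm (T (u n) - T x))\<^sup>2)) \<longlonglongrightarrow> 0"
  shows "u \<longlonglongrightarrow> x" "(\<lambda>n. T (u n)) \<longlonglongrightarrow> T x"
proof -
  show "u \<longlonglongrightarrow> x"
  proof (rule LIM_zero_cancel, rule Lim_null_comparison[OF _ assms])
    show "\<forall>\<^sub>F n in sequentially. norm (u n - x) \<le> sqrt ((norm (u n - x))\<^sup>2 + (norm (T (u n) - T x))\<^sup>2)"
      by (simp add: always_eventually real_sqrt_sum_squares_ge1)
  qed
  show "(\<lambda>n. T (u n)) \<longlonglongrightarrow> T x"
  proof (rule LIM_zero_cancel, rule Lim_null_comparison[OF _ assms])
    show "\<forall>\<^sub>F n in sequentially. norm (T (u n) - T x) \<le> sqrt ((norm (u n - x))\<^sup>2 + (norm (T (u n) - T x))\<^sup>2)"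
      by (simp add: always_eventually real_sqrt_sum_squares_ge2)
  qed
qed

context afo begin

lemma direct:
  assumes "w \<in> W0" "a \<in> op_ker W T1" "b \<in> op_ker Wt Tt1" "w + a + b = 0"
  shows "w = 0 \<and> a = 0 \<and> b = 0"
proof -
  have E: "2 * mu * norm a \<le> c * norm (0::'a) + norm (T1 0)" "2 * mu * norm b \<le> norm (T1 0)"
    using est[OF assms(1-3)] assms(4) by auto
  have "T1 0 = 0" using a1zero by blast
  then have "2 * mu * norm a \<le> 0" "2 * mu * norm b \<le> 0" using E by auto
  then have "norm a \<le> 0" "norm b \<le> 0" using mupos
    by (simp_all add: mult_le_0_iff)
  then have "a = 0" "b = 0" by auto
  then show ?thesis using assms(4) by simp
qed

lemma closed_sum3:
  "closed_graph_norm W T1 {w + a + b | w a b. w \<in> W0 \<and> a \<in> op_ker W T1 \<and> b \<in> op_ker Wt Tt1}"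
  unfolding closed_graph_norm_def
proof (intro allI impI)
  fix u x
  assume u: "\<forall>n. u n \<in> {w + a + b | w a b. w \<in> W0 \<and> a \<in> op_ker W T1 \<and> b \<in> op_ker Wt Tt1}"
    and x: "x \<in> W"
    and g: "(\<lambda>n. sqrt ((norm (u n - x))\<^sup>2 + (norm (T1 (u n) - T1 x))\<^sup>2)) \<longlonglongrightarrow> 0"
  have "\<forall>n. \<exists>t. u n = fst t + fst (snd t) + snd (snd t) \<and> fst t \<in> W0 \<and> fst (snd t) \<in> op_ker W T1
      \<and> snd (snd t) \<in> op_ker Wt Tt1"
  proof
    fix n
    obtain w a b where "u n = w + a + b" "w \<in> W0" "a \<in> op_ker W T1" "b \<in> op_ker Wt Tt1"
      using u by blast
    then show "\<exists>t. u n = fst t + fst (snd t) + snd (snd t) \<and> fst t \<in> W0 \<and> fst (snd t) \<in> op_ker W T1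
      \<and> snd (snd t) \<in> op_ker Wt Tt1" by (intro exI[of _ "(w, a, b)"]) simp
  qed
  then obtain f where f: "\<forall>n. u n = fst (f n) + fst (snd (f n)) + snd (snd (f n)) \<and> fst (f n) \<in> W0
     \<and> fst (snd (f n)) \<in> op_ker W T1 \<and> snd (snd (f n)) \<in> op_ker Wt Tt1"
    by (rule choice[THEN exE]) blast
  have ue: "u = (\<lambda>n. fst (f n) + fst (snd (f n)) + snd (snd (f n)))" using f by auto
  have c1: "(\<lambda>n. fst (f n) + fst (snd (f n)) + snd (snd (f n))) \<longlonglongrightarrow> x"
    using graph_conv(1)[OF g] unfolding ue .
  have c2: "(\<lambda>n. T1 (fst (f n) + fst (snd (f n)) + snd (snd (f n)))) \<longlonglongrightarrow> T1 x"
    using graph_conv(2)[OF g] unfolding ue .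
  from closed3[of "\<lambda>n. fst (f n)" "\<lambda>n. fst (snd (f n))" "\<lambda>n. snd (snd (f n))", OF _ _ _ x c1 c2]
  show "x \<in> {w + a + b | w a b. w \<in> W0 \<and> a \<in> op_ker W T1 \<and> b \<in> op_ker Wt Tt1}"
    using f by blast
qed

lemma closed_sum_a:
  "closed_graph_norm W T1 {w + a | w a. w \<in> W0 \<and> a \<in> op_ker W T1}"
  unfolding closed_graph_norm_def
proof (intro allI impI)
  fix u x
  assume u: "\<forall>n. u n \<in> {w + a | w a. w \<in> W0 \<and> a \<in> op_ker W T1}"
    and x: "x \<in> W"
    and g: "(\<lambda>n. sqrt ((norm (u n - x))\<^sup>2 + (norm (T1 (u n) - T1 x))\<^sup>2)) \<longlonglongrightarrow> 0"
  have "\<forall>n. \<exists>t. u n = fst t + snd t \<and> fst t \<in> W0 \<and> snd t \<in> op_ker W T1"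
    using u by fastforce
  then obtain f where f: "\<forall>n. u n = fst (f n) + snd (f n) \<and> fst (f n) \<in> W0 \<and> snd (f n) \<in> op_ker W T1"
    by (rule choice[THEN exE]) blast
  have ue: "u = (\<lambda>n. fst (f n) + snd (f n) + 0)" using f by auto
  have c1: "(\<lambda>n. fst (f n) + snd (f n) + 0) \<longlonglongrightarrow> x"
    using graph_conv(1)[OF g] unfolding ue .
  have c2: "(\<lambda>n. T1 (fst (f n) + snd (f n) + 0)) \<longlonglongrightarrow> T1 x"
    using graph_conv(2)[OF g] unfolding ue .
  have z: "\<forall>n. (0::'a) \<in> op_ker Wt Tt1" using k2(1) by blast
  obtain w' a' b' where r: "w' \<in> W0" "a' \<in> op_ker W T1" "x = w' + a' + b'" "(\<lambda>n. 0::'a) \<longlonglongrightarrow> b'"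
    using closed3[of "\<lambda>n. fst (f n)" "\<lambda>n. snd (f n)" "\<lambda>n. 0", OF _ _ z x c1 c2] f by blast
  have "b' = 0" using r(4) by (simp add: LIMSEQ_const_iff)
  then show "x \<in> {w + a | w a. w \<in> W0 \<and> a \<in> op_ker W T1}" using r by auto
qed

lemma closed_sum_b:
  "closed_graph_norm W T1 {w + b | w b. w \<in> W0 \<and> b \<in> op_ker Wt Tt1}"
  unfolding closed_graph_norm_def
proof (intro allI impI)
  fix u x
  assume u: "\<forall>n. u n \<in> {w + b | w b. w \<in> W0 \<and> b \<in> op_ker Wt Tt1}"
    and x: "x \<in> W"
    and g: "(\<lambda>n. sqrt ((norm (u n - x))\<^sup>2 + (norm (T1 (u n) - T1 x))\<^sup>2)) \<longlonglongrightarrow> 0"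
  have "\<forall>n. \<exists>t. u n = fst t + snd t \<and> fst t \<in> W0 \<and> snd t \<in> op_ker Wt Tt1"
    using u by fastforce
  then obtain f where f: "\<forall>n. u n = fst (f n) + snd (f n) \<and> fst (f n) \<in> W0 \<and> snd (f n) \<in> op_ker Wt Tt1"
    by (rule choice[THEN exE]) blast
  have ue: "u = (\<lambda>n. fst (f n) + 0 + snd (f n))" using f by auto
  have c1: "(\<lambda>n. fst (f n) + 0 + snd (f n)) \<longlonglongrightarrow> x"
    using graph_conv(1)[OF g] unfolding ue .
  have c2: "(\<lambda>n. T1 (fst (f n) + 0 + snd (f n))) \<longlonglongrightarrow> T1 x"
    using graph_conv(2)[OF g] unfolding ue .
  have z: "\<forall>n. (0::'a) \<in> op_ker W T1" using k1(1) by blast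
  obtain w' a' b' where r: "w' \<in> W0" "b' \<in> op_ker Wt Tt1" "x = w' + a' + b'" "(\<lambda>n. 0::'a) \<longlonglongrightarrow> a'"
    using closed3[of "\<lambda>n. fst (f n)" "\<lambda>n. 0" "\<lambda>n. snd (f n)", OF _ z _ x c1 c2] f by blast
  have "a' = 0" using r(4) by (simp add: LIMSEQ_const_iff)
  then show "x \<in> {w + b | w b. w \<in> W0 \<and> b \<in> op_ker Wt Tt1}" using r by auto
qed

lemma subspace3:
  "csubspace {w + a + b | w a b. w \<in> W0 \<and> a \<in> op_ker W T1 \<and> b \<in> op_ker Wt Tt1}"
  unfolding csubspace_def
proof (intro conjI ballI allI)
  show "0 \<in> {w + a + b | w a b. w \<in> W0 \<and> a \<in> op_ker W T1 \<and> b \<in> op_ker Wt Tt1}"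
    using dd_props(2)[OF lin0] k1(1) k2(1) by force
next
  fix x y assume "x \<in> {w + a + b | w a b. w \<in> W0 \<and> a \<in> op_ker W T1 \<and> b \<in> op_ker Wt Tt1}"
    "y \<in> {w + a + b | w a b. w \<in> W0 \<and> a \<in> op_ker W T1 \<and> b \<in> op_ker Wt Tt1}"
  then obtain w1 a1 b1 w2 a2 b2 where h: "x = w1 + a1 + b1" "w1 \<in> W0" "a1 \<in> op_ker W T1" "b1 \<in> op_ker Wt Tt1"
    "y = w2 + a2 + b2" "w2 \<in> W0" "a2 \<in> op_ker W T1" "b2 \<in> op_ker Wt Tt1" by blast
  have "x + y = (w1 + w2) + (a1 + a2) + (b1 + b2)" using h by (simp add: algebra_simps)
  moreover have "w1 + w2 \<in> W0" "a1 + a2 \<in> op_ker W T1" "b1 + b2 \<in> op_ker Wt Tt1"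
    using h dd_props(3)[OF lin0] k1(2) k2(2) by auto
  ultimately show "x + y \<in> {w + a + b | w a b. w \<in> W0 \<and> a \<in> op_ker W T1 \<and> b \<in> op_ker Wt Tt1}"
    by blast
next
  fix s x assume "x \<in> {w + a + b | w a b. w \<in> W0 \<and> a \<in> op_ker W T1 \<and> b \<in> op_ker Wt Tt1}"
  then obtain w1 a1 b1 where h: "x = w1 + a1 + b1" "w1 \<in> W0" "a1 \<in> op_ker W T1" "b1 \<in> op_ker Wt Tt1"
    by blast
  have "s *\<^sub>C x = s *\<^sub>C w1 + s *\<^sub>C a1 + s *\<^sub>C b1" using h by (simp add: scaleC_add_right)
  moreover have "s *\<^sub>C w1 \<in> W0" "s *\<^sub>C a1 \<in> op_ker W T1" "s *\<^sub>C b1 \<in> op_ker Wt Tt1"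
    using h dd_props(4)[OF lin0] k1(4) k2(4) by auto
  ultimately show "s *\<^sub>C x \<in> {w + a + b | w a b. w \<in> W0 \<and> a \<in> op_ker W T1 \<and> b \<in> op_ker Wt Tt1}"
    by blast
qed

end

theorem lemma3p5:
  fixes W0 W Wt :: "'a::complex_hilbert set" and T0 Tt0 T1 Tt1 :: "'a \<Rightarrow> 'a"
  assumes "closed_joint_AFO W0 T0 Tt0"
    and "is_adjoint W0 Tt0 W T1"
    and "is_adjoint W0 T0 Wt Tt1"
  shows "(\<forall>w a b. w \<in> W0 \<and> a \<in> op_ker W T1 \<and> b \<in> op_ker Wt Tt1 \<and> w + a + b = 0
            \<longrightarrow> w = 0 \<and> a = 0 \<and> b = 0)
     \<and> {w + a + b | w a b. w \<in> W0 \<and> a \<in> op_ker W T1 \<and> b \<in> op_ker Wt Tt1} \<subseteq> W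
     \<and> csubspace {w + a + b | w a b. w \<in> W0 \<and> a \<in> op_ker W T1 \<and> b \<in> op_ker Wt Tt1}
     \<and> closed_graph_norm W T1 {w + a + b | w a b. w \<in> W0 \<and> a \<in> op_ker W T1 \<and> b \<in> op_ker Wt Tt1}
     \<and> closed_graph_norm W T1 {w + a | w a. w \<in> W0 \<and> a \<in> op_ker W T1}
     \<and> closed_graph_norm W T1 {w + b | w b. w \<in> W0 \<and> b \<in> op_ker Wt Tt1}"
proof -
  from assms(1) obtain c mu where
    "dd_lin_op W0 T0" "dd_lin_op W0 Tt0" "\<forall>\<phi>\<in>W0. \<forall>\<psi>\<in>W0. cinner (T0 \<phi>) \<psi> = cinner \<phi> (Tt0 \<psi>)"
    "c > 0" "\<forall>\<phi>\<in>W0. norm (T0 \<phi> + Tt0 \<phi>) \<le> c * norm \<phi>"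
    "mu > 0" "\<forall>\<phi>\<in>W0. Re (cinner (T0 \<phi> + Tt0 \<phi>) \<phi>) \<ge> 2*mu*(norm \<phi>)^2"
    "closed_op W0 T0"
    unfolding closed_joint_AFO_def joint_AFO_def by blast
  then interpret afo W0 W Wt T0 Tt0 T1 Tt1 c mu
    using assms(2,3) by unfold_locales auto
  have sub: "{w + a + b | w a b. w \<in> W0 \<and> a \<in> op_ker W T1 \<and> b \<in> op_ker Wt Tt1} \<subseteq> W"
    using est by blast
  show ?thesis using direct sub subspace3 closed_sum3 closed_sum_a closed_sum_b by blast
qed

end
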